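(* Let $\mathcal{N}_1,\ldots,\mathcal{N}_l$ be subsets of $\mathcal{N}=\{1,\ldots,n\}$ with $\bigcup_{i=1}^l\mathcal{N}_i=\mathcal{N}$, satisfying the tree condition $$\mathcal{N}_i\cap\mathcal{N}_j\neq\emptyset\implies(\mathcal{N}_i\subseteq\mathcal{N}_j\text{ or }\mathcal{N}_j\subseteq\mathcal{N}_i).$$ For each $i$ let $\|\cdot\|_i:\mathbb{R}^{|\mathcal{N}_i|}\to\mathbb{R}_+$ be an arbitrary norm, and define $$\|z\|_A=\sum_{i=1}^l\|z_{\mathcal{N}_i}\|_i ,$$ where $\|z_{\mathcal{N}_i}\|_i$ means $\|\cdot\|_i$ applied to $(z_j)_{j\in\mathcal{N}_i}$. Let $\mathcal{G}=\{G_1,\ldots,G_g\}$ be the collection of distinct inclusion-maximal sets among $\mathcal{N}_1,\ldots,\mathcal{N}_l$ (these form a partition of $\mathcal{N}$). Then $\|\cdot\|_A$ is decomposable with respect to $\mathcal{G}$.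
   Context: For $z\in\mathbb{R}^n$ and $\Lambda\subseteq\mathcal{N}$, $z_\Lambda\in\mathbb{R}^n$ denotes the vector with $(z_\Lambda)_i=z_i$ for $i\in\Lambda$ and $0$ otherwise; $\mathrm{supp}(u)=\{i:u_i\neq0\}$. For a partition $\mathcal{G}=\{G_1,\ldots,G_g\}$ of $\mathcal{N}$ and $S\subseteq\{1,\ldots,g\}$ let $G_S=\bigcup_{i\in S}G_i$. A norm $\|\cdot\|$ on $\mathbb{R}^n$ is decomposable with respect to $\mathcal{G}$ if, whenever $u,v\in\mathbb{R}^n$ satisfy $\mathrm{supp}(u)\subseteq G_{S_u}$, $\mathrm{supp}(v)\subseteq G_{S_v}$ with $S_u,S_v$ disjoint subsets of $\{1,\ldots,g\}$, one has $\|u+v\|=\|u\|+\|v\|$. *)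

theory Defs
  imports "HOL-Analysis.Analysis"
begin

text \<open>Vectors in R^n are modelled as real^'n for a finite index type 'n (so N = UNIV).\<close>

definition restr :: "'n set \<Rightarrow> real^'n \<Rightarrow> real^'n" where
  "restr \<Lambda> z = (\<chi> j. if j \<in> \<Lambda> then z $ j else 0)"

definition supp_vec :: "real^'n \<Rightarrow> 'n set" where
  "supp_vec u = {i. u $ i \<noteq> 0}"

text \<open>A norm on R^{|Lambda|}, represented as a function on the coordinate subspace
  {x. supp x \<subseteq> Lambda} of R^n (values outside that subspace are irrelevant).\<close>
definition coord_norm :: "'n set \<Rightarrow> (real^'n \<Rightarrow> real) \<Rightarrow> bool" where
  "coord_norm \<Lambda> nu \<longleftrightarrow>
     (\<forall>x. supp_vec x \<subseteq> \<Lambda> \<longrightarrow> nu x \<ge> 0) \<and>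
     (\<forall>x. supp_vec x \<subseteq> \<Lambda> \<longrightarrow> (nu x = 0 \<longleftrightarrow> x = 0)) \<and>
     (\<forall>x c. supp_vec x \<subseteq> \<Lambda> \<longrightarrow> nu (c *\<^sub>R x) = \<bar>c\<bar> * nu x) \<and>
     (\<forall>x y. supp_vec x \<subseteq> \<Lambda> \<longrightarrow> supp_vec y \<subseteq> \<Lambda> \<longrightarrow> nu (x + y) \<le> nu x + nu y)"

text \<open>Decomposability w.r.t. a partition given as a set of blocks; a set of group
  indices S corresponds to a subset of the blocks.\<close>
definition decomposable :: "(real^'n \<Rightarrow> real) \<Rightarrow> 'n set set \<Rightarrow> bool" where
  "decomposable f \<G> \<longleftrightarrow>
     (\<forall>u v Su Sv. Su \<subseteq> \<G> \<longrightarrow> Sv \<subseteq> \<G> \<longrightarrow> Su \<inter> Sv = {} \<longrightarrow>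
        supp_vec u \<subseteq> \<Union>Su \<longrightarrow> supp_vec v \<subseteq> \<Union>Sv \<longrightarrow> f (u + v) = f u + f v)"

end

theory Submission
  imports Defs
begin

lemma restr_add: "restr A (u + v) = restr A u + restr A v"
  by (simp add: restr_def vec_eq_iff)

lemma restr_zero: "A \<inter> supp_vec u = {} \<Longrightarrow> restr A u = 0"
  by (auto simp: restr_def vec_eq_iff supp_vec_def)

lemma nu_zero: "coord_norm A nu \<Longrightarrow> nu 0 = 0"
  unfolding coord_norm_def supp_vec_def by auto

theorem corollary2p3:
  fixes Ns :: "nat \<Rightarrow> 'n::finite set"
    and nu :: "nat \<Rightarrow> real^'n \<Rightarrow> real"
    and l :: nat
  assumes cover: "(\<Union>i<l. Ns i) = UNIV"
    and tree: "\<forall>i<l. \<forall>j<l. Ns i \<inter> Ns j \<noteq> {} \<longrightarrow> Ns i \<subseteq> Ns j \<or> Ns j \<subseteq> Ns i"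
    and norms: "\<forall>i<l. coord_norm (Ns i) (nu i)"
  shows "decomposable (\<lambda>z. \<Sum>i<l. nu i (restr (Ns i) z))
           {Ns i | i. i < l \<and> \<not> (\<exists>j<l. Ns i \<subset> Ns j)}"
  unfolding decomposable_def
proof (intro allI impI)
  fix u v Su Sv
  let ?G = "{Ns i | i. i < l \<and> \<not> (\<exists>j<l. Ns i \<subset> Ns j)}"
  assume su: "Su \<subseteq> ?G" and sv: "Sv \<subseteq> ?G" and dj: "Su \<inter> Sv = {}"
    and pu: "supp_vec u \<subseteq> \<Union>Su" and pv: "supp_vec v \<subseteq> \<Union>Sv"
  have inc: "Ns i \<subseteq> B" if "i < l" "B \<in> ?G" "Ns i \<inter> B \<noteq> {}" for i B
  proof -
    from that(2) obtain a where a: "B = Ns a" "a < l" "\<not> (\<exists>j<l. Ns a \<subset> Ns j)" by blast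
    show ?thesis using tree that(1,3) a by blast
  qed
  have one: "Ns i \<inter> \<Union>Su = {} \<or> Ns i \<inter> \<Union>Sv = {}" if i: "i < l" for i
  proof (rule ccontr)
    assume "\<not> ?thesis"
    then obtain B1 B2 where b: "B1 \<in> Su" "B2 \<in> Sv" "Ns i \<inter> B1 \<noteq> {}" "Ns i \<inter> B2 \<noteq> {}" by blast
    have s1: "Ns i \<subseteq> B1" using inc[OF i] b su by blast
    have s2: "Ns i \<subseteq> B2" using inc[OF i] b sv by blast
    from b su sv obtain a1 a2 where a: "B1 = Ns a1" "a1 < l" "\<not> (\<exists>j<l. Ns a1 \<subset> Ns j)"
      "B2 = Ns a2" "a2 < l" "\<not> (\<exists>j<l. Ns a2 \<subset> Ns j)" by blast
    have "B1 \<inter> B2 \<noteq> {}" using s1 s2 b(3) by blast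
    hence "B1 = B2" using tree a by blast
    thus False using dj b by blast
  qed
  have "nu i (restr (Ns i) (u + v)) = nu i (restr (Ns i) u) + nu i (restr (Ns i) v)"
    if i: "i < l" for i
  proof -
    have z: "nu i 0 = 0" using nu_zero norms i by blast
    from one[OF i] show ?thesis
    proof
      assume "Ns i \<inter> \<Union>Su = {}"
      hence "restr (Ns i) u = 0" using pu by (intro restr_zero) blast
      thus ?thesis by (simp add: restr_add z)
    next
      assume "Ns i \<inter> \<Union>Sv = {}"
      hence "restr (Ns i) v = 0" using pv by (intro restr_zero) blast
      thus ?thesis by (simp add: restr_add z)
    qed
  qed
  thus "(\<Sum>i<l. nu i (restr (Ns i) (u + v))) =
        (\<Sum>i<l. nu i (restr (Ns i) u)) + (\<Sum>i<l. nu i (restr (Ns i) v))"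
    by (simp add: sum.distrib)
qed

end
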